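(* Let $A,B\in\mathrm{GL}(\mathcal S)$ satisfy $A|_{\Delta_0}=B|_{\Delta_0}$. Then $A=B$.
   Context: Work over an algebraically closed field of characteristic $\neq2$. $F(X)=\sum_{i=0}^6f_iX^i$, $f_6\neq0$, distinct roots $\theta_1,\dots,\theta_6$. $P_j(X)=\prod_{i\ne j}(X-\theta_i)$, $\omega_j=P_j(\theta_j)$. Points of $\mathbb P^5$ are identified with $P(X)=\sum_{j=0}^5p_jX^j$; $\pi_j=P(\theta_j)/\omega_j$. $\mathcal S\subset\mathbb P^5$ is the smooth surface defined by $\sum_j\theta_j^i\omega_j\pi_j^2=0$, $i=0,1,2$. $\varepsilon^{(i)}$ is the involution $\pi_j\mapsto(-1)^{\delta_{ij}}\pi_j$; $\mathrm{Inv}(\mathcal S)$ is the group of order 32 generated by them. $\Delta_0=\{(p_0:p_1:0:0:0:0)\}$, $\Delta_i=\varepsilon^{(i)}(\Delta_0)$, $\Delta_{ij}=\varepsilon^{(i)}\varepsilon^{(j)}(\Delta_0)$, $\Delta_{ijk}=\varepsilon^{(i)}\varepsilon^{(j)}\varepsilon^{(k)}(\Delta_0)$; these are 32 lines and it is known that they are all the lines on $\mathcal S$. $\mathrm{GL}(\mathcal S)$ denotes the group of automorphisms of $\mathcal S$ which are restrictions of projective linear transformations of $\mathbb P^5$. *)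

theory Defs
  imports "HOL-Computational_Algebra.Polynomial" "Jordan_Normal_Form.Matrix"
begin

text \<open>Points of P^5 are represented by nonzero vectors (p_0,...,p_5) in 'a^6
  (vectors of dimension 6, indices 0..5), identified with P(X) = sum p_j X^j;
  two vectors represent the same point iff they are proportional.
  The roots theta_1..theta_6 are indexed by 1..6.\<close>

definition proj_eq :: "'a::field vec \<Rightarrow> 'a vec \<Rightarrow> bool" where
  "proj_eq u v \<longleftrightarrow> (\<exists>c. c \<noteq> 0 \<and> u = c \<cdot>\<^sub>v v)"

definition is_proj_point :: "'a::field vec \<Rightarrow> bool" where
  "is_proj_point p \<longleftrightarrow> p \<in> carrier_vec 6 \<and> p \<noteq> 0\<^sub>v 6"

definition omega :: "(nat \<Rightarrow> 'a::field) \<Rightarrow> nat \<Rightarrow> 'a" where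
  "omega \<theta> j = (\<Prod>i\<in>{1..6} - {j}. \<theta> j - \<theta> i)"

definition Pval :: "'a::field vec \<Rightarrow> 'a \<Rightarrow> 'a" where
  "Pval p x = (\<Sum>k<6. p $ k * x ^ k)"

definition pi_coord :: "(nat \<Rightarrow> 'a::field) \<Rightarrow> 'a vec \<Rightarrow> nat \<Rightarrow> 'a" where
  "pi_coord \<theta> p j = Pval p (\<theta> j) / omega \<theta> j"

definition on_S :: "(nat \<Rightarrow> 'a::field) \<Rightarrow> 'a vec \<Rightarrow> bool" where
  "on_S \<theta> p \<longleftrightarrow> is_proj_point p \<and>
     (\<forall>i\<in>{0,1,2::nat}. (\<Sum>j\<in>{1..6}. \<theta> j ^ i * omega \<theta> j * (pi_coord \<theta> p j)^2) = 0)"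

definition on_Delta0 :: "'a::field vec \<Rightarrow> bool" where
  "on_Delta0 p \<longleftrightarrow> is_proj_point p \<and> (\<forall>k\<in>{2..5}. p $ k = 0)"

definition in_GL_S :: "(nat \<Rightarrow> 'a::field) \<Rightarrow> 'a mat \<Rightarrow> bool" where
  "in_GL_S \<theta> M \<longleftrightarrow> M \<in> carrier_mat 6 6 \<and> invertible_mat M \<and>
     (\<forall>p. on_S \<theta> p \<longrightarrow> on_S \<theta> (M *\<^sub>v p)) \<and>
     (\<forall>q. on_S \<theta> q \<longrightarrow> (\<exists>p. on_S \<theta> p \<and> proj_eq (M *\<^sub>v p) q))"

end

theory Submission
  imports Defs
begin


abbreviation II :: "nat set" where "II \<equiv> {1..6}"

definition PP :: "(nat \<Rightarrow> 'a::field) \<Rightarrow> nat \<Rightarrow> 'a poly" where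
 "PP \<theta> j = (\<Prod>i\<in>{1..6}-{j}. [:- \<theta> i, 1:])"

definition lc :: "(nat \<Rightarrow> 'a::field) \<Rightarrow> (nat \<Rightarrow> 'a) \<Rightarrow> 'a vec" where
 "lc \<theta> x = vec 6 (\<lambda>k. \<Sum>l\<in>{1..6}. x l * coeff (PP \<theta> l) k)"

definition ee :: "nat \<Rightarrow> nat \<Rightarrow> 'a::field" where "ee l = (\<lambda>i. if i = l then 1 else 0)"

lemma lc_carrier[simp]: "lc \<theta> x \<in> carrier_vec 6" by (simp add: lc_def)

lemma omega_nz: assumes "inj_on \<theta> II" "j \<in> II" shows "omega \<theta> j \<noteq> 0"
  using assms unfolding omega_def inj_on_def by (auto simp: prod_zero_iff)

lemma deg_PP: "j \<in> II \<Longrightarrow> degree (PP \<theta> j) < 6"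
proof -
  assume j: "j \<in> II"
  have "degree (PP \<theta> j) \<le> sum (degree \<circ> (\<lambda>i. [:- \<theta> i, 1:])) (II - {j})"
    unfolding PP_def by (rule degree_prod_sum_le) simp
  also have "\<dots> = card (II - {j})" by simp
  also have "\<dots> = 5" using j by simp
  finally show ?thesis by simp
qed

lemma Pval_poly: fixes p :: "'a::field poly" assumes "degree p < 6" shows "(\<Sum>k<6. coeff p k * x ^ k) = poly p x"
proof -
  have "poly p x = (\<Sum>k\<le>degree p. coeff p k * x ^ k)" by (rule poly_altdef)
  also have "\<dots> = (\<Sum>k<6. coeff p k * x ^ k)"
    by (rule sum.mono_neutral_left) (use assms in \<open>auto simp: coeff_eq_0\<close>)
  finally show ?thesis by simp
qed

lemma Pval_lc: "Pval (lc \<theta> x) y = (\<Sum>l\<in>II. x l * poly (PP \<theta> l) y)"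
proof -
  have "Pval (lc \<theta> x) y = (\<Sum>k<6. (\<Sum>l\<in>II. x l * coeff (PP \<theta> l) k) * y ^ k)"
    by (simp add: Pval_def lc_def)
  also have "\<dots> = (\<Sum>l\<in>II. x l * (\<Sum>k<6. coeff (PP \<theta> l) k * y ^ k))"
    by (simp add: sum_distrib_left sum_distrib_right mult.assoc) (rule sum.swap)
  also have "\<dots> = (\<Sum>l\<in>II. x l * poly (PP \<theta> l) y)"
    by (rule sum.cong) (auto simp: Pval_poly deg_PP)
  finally show ?thesis .
qed

lemma poly_PP: assumes "m \<in> II" "j \<in> II"
  shows "poly (PP \<theta> j) (\<theta> m) = (if m = j then omega \<theta> j else 0)"
proof (cases "m = j")
  case True thus ?thesis by (simp add: PP_def poly_prod omega_def)
next
  case False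
  then have "m \<in> II - {j}" using assms by auto
  then show ?thesis using False unfolding PP_def poly_prod
    by (auto simp: prod_zero_iff)
qed

lemma Pval_lc_theta: assumes "m \<in> II" shows "Pval (lc \<theta> x) (\<theta> m) = x m * omega \<theta> m"
proof -
  have "Pval (lc \<theta> x) (\<theta> m) = (\<Sum>l\<in>II. if l = m then x m * omega \<theta> m else 0)"
    unfolding Pval_lc by (rule sum.cong) (use assms in \<open>auto simp: poly_PP\<close>)
  also have "\<dots> = x m * omega \<theta> m" using assms by simp
  finally show ?thesis .
qed

lemma pi_lc: assumes "inj_on \<theta> II" "m \<in> II" shows "pi_coord \<theta> (lc \<theta> x) m = x m"
  using omega_nz[OF assms] assms by (simp add: pi_coord_def Pval_lc_theta)

lemma Pval_inj: assumes "inj_on \<theta> II" "p \<in> carrier_vec 6" "\<forall>m\<in>II. Pval p (\<theta> m) = 0"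
  shows "p = 0\<^sub>v 6"
proof -
  define D where "D = (\<Sum>k<6. monom (p $ k) k)"
  have pD: "poly D y = Pval p y" for y by (simp add: D_def poly_sum poly_monom Pval_def)
  have dD: "degree D < 6"
  proof -
    have "degree D \<le> 5" unfolding D_def
      by (rule degree_sum_le) (auto intro: order.trans[OF degree_monom_le])
    thus ?thesis by simp
  qed
  have "D = 0"
  proof (rule poly_eqI_degree[of "\<theta> ` II"])
    show "\<And>x. x \<in> \<theta> ` II \<Longrightarrow> poly D x = poly 0 x" using assms(3) pD by auto
    have "card (\<theta> ` II) = 6" using assms(1) by (simp add: card_image)
    then show "degree D < card (\<theta> ` II)" "degree (0::'a poly) < card (\<theta> ` II)" using dD by auto
  qed
  have "p $ k = 0" if "k < 6" for k
  proof -
    have "coeff D k = (\<Sum>k'<6. if k' = k then p $ k' else 0)"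
      by (simp add: D_def coeff_sum coeff_monom)
    also have "\<dots> = p $ k" using that by simp
    finally show ?thesis using \<open>D = 0\<close> by simp
  qed
  then show ?thesis using assms(2) by (intro eq_vecI) (auto simp: lc_def)
qed

lemma Pval_minus: "p \<in> carrier_vec 6 \<Longrightarrow> q \<in> carrier_vec 6 \<Longrightarrow> Pval (p - q) y = Pval p y - Pval q y"
  by (simp add: Pval_def sum_subtractf left_diff_distrib)

lemma lc_complete: assumes "inj_on \<theta> II" "p \<in> carrier_vec 6" shows "p = lc \<theta> (pi_coord \<theta> p)"
proof -
  have "p - lc \<theta> (pi_coord \<theta> p) = 0\<^sub>v 6"
    apply (rule Pval_inj[OF assms(1)])
    using assms omega_nz[OF assms(1)] by (auto simp: Pval_minus Pval_lc_theta pi_coord_def)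
  then have "p $ i = lc \<theta> (pi_coord \<theta> p) $ i" if "i < 6" for i
    using that assms(2) by (metis carrier_vecD index_minus_vec(1) index_zero_vec(1) lc_carrier right_minus_eq)
  then show ?thesis using assms(2) by (intro eq_vecI) (auto simp: lc_def)
qed



lemma ee_sum: assumes "l \<in> II" shows "(\<Sum>la\<in>II. ee l la * f la) = f l"
proof -
  have "(\<Sum>la\<in>II. ee l la * f la) = (\<Sum>la\<in>II. if la = l then f la else 0)"
    by (rule sum.cong) (auto simp: ee_def)
  then show ?thesis using assms by simp
qed

lemma lc_ee: assumes "l \<in> II" shows "lc \<theta> (ee l) = vec 6 (\<lambda>k. coeff (PP \<theta> l) k)"
proof (rule eq_vecI)
  fix i assume "i < dim_vec (vec 6 (\<lambda>k. coeff (PP \<theta> l) k))"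
  then have i: "i<6" by simp
  then show "lc \<theta> (ee l) $ i = vec 6 (\<lambda>k. coeff (PP \<theta> l) k) $ i"
    unfolding lc_def index_vec[OF i] using ee_sum[OF assms, where f="\<lambda>la. coeff (PP \<theta> la) i"] by simp
qed (simp add: lc_def)

lemma matvec_comp: "C \<in> carrier_mat 6 6 \<Longrightarrow> v \<in> carrier_vec 6 \<Longrightarrow> i < 6 \<Longrightarrow>
   (C *\<^sub>v v) $ i = (\<Sum>k<6. C $$ (i,k) * v $ k)"
  by (simp add: scalar_prod_def row_def lessThan_atLeast0)

lemma mat_lc_comp: assumes C: "C \<in> carrier_mat 6 6" and i: "i < 6"
  shows "(C *\<^sub>v lc \<theta> x) $ i = (\<Sum>l\<in>II. x l * (C *\<^sub>v lc \<theta> (ee l)) $ i)"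
proof -
  have "(C *\<^sub>v lc \<theta> x) $ i = (\<Sum>k<6. C $$ (i,k) * (\<Sum>l\<in>II. x l * coeff (PP \<theta> l) k))"
    using C i by (subst matvec_comp) (auto simp: lc_def)
  also have "\<dots> = (\<Sum>l\<in>II. x l * (\<Sum>k<6. C $$ (i,k) * coeff (PP \<theta> l) k))"
    by (simp add: sum_distrib_left mult.left_commute) (rule sum.swap)
  also have "\<dots> = (\<Sum>l\<in>II. x l * (C *\<^sub>v lc \<theta> (ee l)) $ i)"
    by (rule sum.cong) (use C i in \<open>auto simp: matvec_comp lc_ee simp del: index_mult_mat_vec\<close>)
  finally show ?thesis .
qed

definition gg :: "(nat \<Rightarrow> 'a::field) \<Rightarrow> 'a mat \<Rightarrow> nat \<Rightarrow> nat \<Rightarrow> 'a" where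
  "gg \<theta> C l m = pi_coord \<theta> (C *\<^sub>v lc \<theta> (ee l)) m"

lemma pi_mat_lc: assumes C: "C \<in> carrier_mat 6 6"
  shows "pi_coord \<theta> (C *\<^sub>v lc \<theta> x) m = (\<Sum>l\<in>II. x l * gg \<theta> C l m)"
proof -
  have "Pval (C *\<^sub>v lc \<theta> x) y = (\<Sum>l\<in>II. x l * Pval (C *\<^sub>v lc \<theta> (ee l)) y)" for y
  proof -
    have "Pval (C *\<^sub>v lc \<theta> x) y = (\<Sum>i<6. (\<Sum>l\<in>II. x l * (C *\<^sub>v lc \<theta> (ee l)) $ i) * y ^ i)"
      unfolding Pval_def by (rule sum.cong) (use C in \<open>auto simp: mat_lc_comp simp del: index_mult_mat_vec\<close>)
    also have "\<dots> = (\<Sum>l\<in>II. x l * Pval (C *\<^sub>v lc \<theta> (ee l)) y)"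
      unfolding Pval_def by (simp add: sum_distrib_left sum_distrib_right mult.assoc) (rule sum.swap)
    finally show ?thesis .
  qed
  then show ?thesis by (simp add: pi_coord_def gg_def sum_divide_distrib)
qed

lemma sqrt_ex: assumes alg: "\<forall>q::'a::field poly. degree q \<ge> 1 \<longrightarrow> (\<exists>x. poly q x = 0)"
  shows "\<exists>r. r * r = (c::'a)"
proof -
  have "degree [:-c,0,1:] \<ge> 1" by simp
  then obtain r where "poly [:-c,0,1:] r = 0" using alg by blast
  then show ?thesis by (auto simp: algebra_simps)
qed

lemma pf: fixes a b c d :: "'a::field"
  assumes "a \<noteq> b" "a \<noteq> c" "a \<noteq> d" "b \<noteq> c" "b \<noteq> d" "c \<noteq> d" and "i \<le> 2"
  shows "a^i/((a-b)*(a-c)*(a-d)) + b^i/((b-a)*(b-c)*(b-d)) + c^i/((c-a)*(c-b)*(c-d))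
     + d^i/((d-a)*(d-b)*(d-c)) = 0"
proof -
  define V where "V = (a-b)*(a-c)*(a-d)*(b-c)*(b-d)*(c-d)"
  have V: "V \<noteq> 0" using assms by (simp add: V_def)
  have e1: "a^i/((a-b)*(a-c)*(a-d)) = a^i*((b-c)*(b-d)*(c-d)) / V"
    using assms V by (simp add: frac_eq_eq V_def, (simp add: algebra_simps)?)
  have e2: "b^i/((b-a)*(b-c)*(b-d)) = (b^i*((c-a)*(a-d)*(c-d))) / V"
    using assms V by (simp add: frac_eq_eq V_def, (simp add: algebra_simps)?)
  have e3: "c^i/((c-a)*(c-b)*(c-d)) = c^i*((a-b)*(a-d)*(b-d)) / V"
    using assms V by (simp add: frac_eq_eq V_def, (simp add: algebra_simps)?)
  have e4: "d^i/((d-a)*(d-b)*(d-c)) = (d^i*((b-a)*(a-c)*(b-c))) / V"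
    using assms V by (simp add: frac_eq_eq V_def, (simp add: algebra_simps)?)
  have num: "a^i*((b-c)*(b-d)*(c-d)) + (b^i*((c-a)*(a-d)*(c-d))) + c^i*((a-b)*(a-d)*(b-d))
      + (d^i*((b-a)*(a-c)*(b-c))) = 0"
  proof -
    have "i = 0 \<or> i = 1 \<or> i = 2" using assms(7) by auto
    then show ?thesis by (elim disjE) (simp_all add: power2_eq_square algebra_simps)
  qed
  show ?thesis unfolding e1 e2 e3 e4 add_divide_distrib[symmetric] num by simp
qed

lemma comb: fixes w a b R :: "nat \<Rightarrow> 'a::field"
  shows "(\<Sum>m\<in>M. w m * (a m + b m + R m)^2) - (\<Sum>m\<in>M. w m * (-a m + b m + R m)^2)
   - (\<Sum>m\<in>M. w m * (a m - b m + R m)^2) + (\<Sum>m\<in>M. w m * (-a m - b m + R m)^2)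
   = 8 * (\<Sum>m\<in>M. w m * a m * b m)"
  by (simp add: sum_subtractf[symmetric] sum.distrib[symmetric] sum_distrib_left)
     (rule sum.cong, simp_all add: algebra_simps power2_eq_square)



lemma Pval_zero[simp]: "Pval (0\<^sub>v 6) y = 0" by (simp add: Pval_def)

lemma on_S_lc: assumes inj: "inj_on \<theta> II" and j: "j \<in> II" "x j \<noteq> 0"
  and sums: "\<forall>i\<in>{0,1,2::nat}. (\<Sum>m\<in>II. \<theta> m ^ i * omega \<theta> m * (x m)^2) = 0"
  shows "on_S \<theta> (lc \<theta> x)"
proof -
  have "lc \<theta> x \<noteq> 0\<^sub>v 6"
  proof
    assume "lc \<theta> x = 0\<^sub>v 6"
    then have "pi_coord \<theta> (lc \<theta> x) j = 0" by (simp add: pi_coord_def)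
    then show False using pi_lc[OF inj j(1)] j by simp
  qed
  moreover have "(\<Sum>m\<in>II. \<theta> m ^ i * omega \<theta> m * (pi_coord \<theta> (lc \<theta> x) m)^2) =
      (\<Sum>m\<in>II. \<theta> m ^ i * omega \<theta> m * (x m)^2)" for i
    by (rule sum.cong) (auto simp: pi_lc[OF inj])
  ultimately show ?thesis using sums unfolding on_S_def is_proj_point_def by auto
qed

lemma exists_pt:
  assumes alg: "\<forall>q::'a::field poly. degree q \<ge> 1 \<longrightarrow> (\<exists>x. poly q x = 0)"
    and inj: "inj_on (\<theta>::nat\<Rightarrow>'a) II" and j: "j \<in> II" and k: "k \<in> II" and jk: "j \<noteq> k"
  shows "\<exists>x. x j \<noteq> 0 \<and> x k \<noteq> 0 \<and>
    (\<forall>i\<in>{0,1,2::nat}. (\<Sum>m\<in>II. \<theta> m ^ i * omega \<theta> m * (x m)^2) = 0)"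
proof -
  have "card (II - {j,k}) = 4" using j k jk by (subst card_Diff_subset) auto
  then obtain u where u: "u \<in> II - {j,k}" by (metis card.empty ex_in_conv zero_neq_numeral)
  have "card (II - {j,k} - {u}) = 3" using \<open>card (II - {j,k}) = 4\<close> u by simp
  then obtain v where v: "v \<in> II - {j,k} - {u}" by (metis card.empty ex_in_conv zero_neq_numeral)
  have dis: "j \<noteq> u" "j \<noteq> v" "k \<noteq> u" "k \<noteq> v" "u \<noteq> v" using u v by auto
  have uI: "u \<in> II" and vI: "v \<in> II" using u v by auto
  have th: "\<theta> j \<noteq> \<theta> k" "\<theta> j \<noteq> \<theta> u" "\<theta> j \<noteq> \<theta> v" "\<theta> k \<noteq> \<theta> u" "\<theta> k \<noteq> \<theta> v" "\<theta> u \<noteq> \<theta> v"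
    using inj j k uI vI dis jk unfolding inj_on_def by metis+
  define a where "a m = (if m = j then 1/((\<theta> j-\<theta> k)*(\<theta> j-\<theta> u)*(\<theta> j-\<theta> v))
     else if m = k then 1/((\<theta> k-\<theta> j)*(\<theta> k-\<theta> u)*(\<theta> k-\<theta> v))
     else if m = u then 1/((\<theta> u-\<theta> j)*(\<theta> u-\<theta> k)*(\<theta> u-\<theta> v))
     else if m = v then 1/((\<theta> v-\<theta> j)*(\<theta> v-\<theta> k)*(\<theta> v-\<theta> u)) else 0)" for m
  define x where "x m = (SOME r. r * r = a m / omega \<theta> m)" for m
  have xsq: "omega \<theta> m * (x m)^2 = a m" if "m \<in> II" for m
  proof -
    have "x m * x m = a m / omega \<theta> m" unfolding x_def by (rule someI_ex) (rule sqrt_ex[OF alg])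
    then show ?thesis using omega_nz[OF inj that] by (simp add: power2_eq_square field_simps)
  qed
  have aj: "a j \<noteq> 0" and ak: "a k \<noteq> 0" using th jk by (auto simp: a_def)
  have "x j \<noteq> 0" using xsq[OF j] aj by auto
  moreover have "x k \<noteq> 0" using xsq[OF k] ak by auto
  moreover have "(\<Sum>m\<in>II. \<theta> m ^ i * omega \<theta> m * (x m)^2) = 0" if "i \<in> {0,1,2}" for i
  proof -
    have "i \<le> 2" using that by auto
    have "(\<Sum>m\<in>II. \<theta> m ^ i * omega \<theta> m * (x m)^2) = (\<Sum>m\<in>II. \<theta> m ^ i * a m)"
      by (rule sum.cong) (auto simp: xsq mult.assoc)
    also have "\<dots> = (\<Sum>m\<in>{j,k,u,v}. \<theta> m ^ i * a m)"
      by (rule sum.mono_neutral_right) (use j k uI vI in \<open>auto simp: a_def\<close>)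
    also have "\<dots> = \<theta> j ^ i * a j + \<theta> k ^ i * a k + \<theta> u ^ i * a u + \<theta> v ^ i * a v"
      using dis jk by (simp add: add.assoc)
    also have "\<dots> = 0"
      using pf[OF th \<open>i \<le> 2\<close>] dis jk by (simp add: a_def)
    finally show ?thesis .
  qed
  ultimately show ?thesis by blast
qed

lemma sum_split2: assumes "j \<in> II" "k \<in> II" "j \<noteq> k"
  shows "(\<Sum>l\<in>II. f l) = f j + f k + (\<Sum>l\<in>II - {j,k}. f l)"
proof -
  have "(\<Sum>l\<in>II. f l) = f j + (\<Sum>l\<in>II - {j}. f l)" using assms by (simp add: sum.remove)
  also have "(\<Sum>l\<in>II - {j}. f l) = f k + (\<Sum>l\<in>II - {j} - {k}. f l)" using assms by (simp add: sum.remove)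
  finally show ?thesis by (simp add: add.assoc Diff_insert2[symmetric] insert_commute)
qed



lemma orth:
  assumes alg: "\<forall>q::'a::field poly. degree q \<ge> 1 \<longrightarrow> (\<exists>x. poly q x = 0)"
    and char2: "(2::'a) \<noteq> 0" and inj: "inj_on (\<theta>::nat\<Rightarrow>'a) II" and C: "C \<in> carrier_mat 6 6"
    and SS: "\<forall>p. on_S \<theta> p \<longrightarrow> on_S \<theta> (C *\<^sub>v p)"
    and j: "j\<in>II" and k: "k\<in>II" and jk: "j\<noteq>k" and i: "i \<in> {0,1,2::nat}"
  shows "(\<Sum>m\<in>II. \<theta> m ^ i * omega \<theta> m * gg \<theta> C j m * gg \<theta> C k m) = 0"
proof -
  obtain x where xj: "x j \<noteq> 0" and xk: "x k \<noteq> 0"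
    and xs: "\<forall>i\<in>{0,1,2::nat}. (\<Sum>m\<in>II. \<theta> m ^ i * omega \<theta> m * (x m)^2) = 0"
    using exists_pt[OF alg inj j k jk] by blast
  define R where "R m = (\<Sum>l\<in>II-{j,k}. x l * gg \<theta> C l m)" for m
  define w where "w m = \<theta> m ^ i * omega \<theta> m" for m
  define a where "a m = x j * gg \<theta> C j m" for m
  define b where "b m = x k * gg \<theta> C k m" for m
  have key: "(\<Sum>m\<in>II. w m * (s * a m + t * b m + R m)^2) = 0" if st: "s*s = 1" "t*t = 1" for s t
  proof -
    define y where "y = x(j := s * x j, k := t * x k)"
    have s0: "s \<noteq> 0" using st by auto
    have yj: "y j \<noteq> 0" using xj s0 jk by (auto simp: y_def)
    have ysq: "(y m)^2 = (x m)^2" for m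
    proof -
      have "(s * z)^2 = z^2" "(t * z)^2 = z^2" for z
        using st by (simp_all add: power2_eq_square algebra_simps)
      then show ?thesis by (auto simp: y_def)
    qed
    have "on_S \<theta> (lc \<theta> y)" by (rule on_S_lc[where x=y, OF inj j yj]) (use xs ysq in simp)
    then have "on_S \<theta> (C *\<^sub>v lc \<theta> y)" using SS by blast
    then have "(\<Sum>m\<in>II. \<theta> m ^ i * omega \<theta> m * (pi_coord \<theta> (C *\<^sub>v lc \<theta> y) m)^2) = 0"
      using i unfolding on_S_def by blast
    moreover have "pi_coord \<theta> (C *\<^sub>v lc \<theta> y) m = s * a m + t * b m + R m" for m
    proof -
      have "(\<Sum>l\<in>II-{j,k}. y l * gg \<theta> C l m) = R m"
        unfolding R_def by (rule sum.cong) (auto simp: y_def)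
      then show ?thesis
        unfolding pi_mat_lc[OF C] sum_split2[OF j k jk] using jk
        by (simp add: y_def a_def b_def mult.assoc)
    qed
    ultimately show ?thesis by (simp add: w_def)
  qed
  have "8 * (\<Sum>m\<in>II. w m * a m * b m) = 0"
    using comb[of w a b R II] key[of 1 1] key[of "-1" 1] key[of 1 "-1"] key[of "-1" "-1"] by simp
  moreover have "(8::'a) \<noteq> 0"
  proof -
    have e: "(8::'a) = 2*2*2" by simp
    have "(2::'a)*2*2 \<noteq> 0" using char2 by (simp only: mult_eq_0_iff) simp
    then show ?thesis by (subst e)
  qed
  ultimately have "(\<Sum>m\<in>II. w m * a m * b m) = 0" by simp
  moreover have "(\<Sum>m\<in>II. w m * a m * b m) = x j * x k *
      (\<Sum>m\<in>II. \<theta> m ^ i * omega \<theta> m * gg \<theta> C j m * gg \<theta> C k m)"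
    by (simp add: sum_distrib_left w_def a_def b_def algebra_simps)
  ultimately show ?thesis using xj xk by simp
qed



lemma lc_cong: "(\<And>m. m \<in> II \<Longrightarrow> x m = y m) \<Longrightarrow> lc \<theta> x = lc \<theta> y"
  unfolding lc_def by (intro eq_vecI) auto

lemma lc_zero: "lc \<theta> (\<lambda>_. 0) = 0\<^sub>v 6"
  unfolding lc_def by (intro eq_vecI) auto

lemma lc_smult: "lc \<theta> (\<lambda>m. c * x m) = c \<cdot>\<^sub>v lc \<theta> x"
  unfolding lc_def by (intro eq_vecI) (auto simp: sum_distrib_left mult.assoc)

lemma inv_cancel: fixes C Ci :: "'a::field mat" assumes "C \<in> carrier_mat 6 6" "Ci \<in> carrier_mat 6 6" "Ci * C = 1\<^sub>m 6" "v \<in> carrier_vec 6"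
  shows "Ci *\<^sub>v (C *\<^sub>v v) = v"
proof -
  have "(Ci * C) *\<^sub>v v = Ci *\<^sub>v (C *\<^sub>v v)" using assms by (intro assoc_mult_mat_vec) auto
  then show ?thesis using assms(3) one_mult_mat_vec[OF assms(4)] by simp
qed

locale mono_setup =
  fixes \<theta> :: "nat \<Rightarrow> 'a::field" and C Ci :: "'a mat"
  assumes alg: "\<forall>q::'a poly. degree q \<ge> 1 \<longrightarrow> (\<exists>x. poly q x = 0)"
    and char2: "(2::'a) \<noteq> 0" and inj: "inj_on \<theta> II"
    and C: "C \<in> carrier_mat 6 6" and Ci: "Ci \<in> carrier_mat 6 6"
    and CCi: "C * Ci = 1\<^sub>m 6" and CiC: "Ci * C = 1\<^sub>m 6"
    and SS: "\<forall>p. on_S \<theta> p \<longrightarrow> on_S \<theta> (C *\<^sub>v p)"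
begin

abbreviation "g \<equiv> gg \<theta> C"

lemma orth': "j\<in>II \<Longrightarrow> k\<in>II \<Longrightarrow> j\<noteq>k \<Longrightarrow> i \<in> {0,1,2::nat} \<Longrightarrow>
   (\<Sum>m\<in>II. \<theta> m ^ i * omega \<theta> m * g j m * g k m) = 0"
  by (rule orth[OF alg char2 inj C SS])

lemma F1: assumes j: "j \<in> II" shows "\<exists>m\<in>II. g j m \<noteq> 0"
proof (rule ccontr)
  assume "\<not> ?thesis"
  then have z: "\<forall>m\<in>II. g j m = 0" by auto
  have "C *\<^sub>v lc \<theta> (ee j) = lc \<theta> (pi_coord \<theta> (C *\<^sub>v lc \<theta> (ee j)))"
    by (rule lc_complete[OF inj]) (use C in simp)
  also have "\<dots> = lc \<theta> (\<lambda>_. 0)" by (rule lc_cong) (use z in \<open>simp add: gg_def\<close>)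
  finally have "C *\<^sub>v lc \<theta> (ee j) = 0\<^sub>v 6" by (simp add: lc_zero)
  then have "lc \<theta> (ee j) = Ci *\<^sub>v 0\<^sub>v 6" using inv_cancel[OF C Ci CiC, of "lc \<theta> (ee j)"] by simp
  also have "\<dots> = 0\<^sub>v 6" using Ci by auto
  finally have "pi_coord \<theta> (lc \<theta> (ee j)) j = 0" by (simp add: pi_coord_def)
  then show False using pi_lc[OF inj j] by (simp add: ee_def)
qed

lemma F2: assumes h: "\<forall>k\<in>II. (\<Sum>m\<in>II. omega \<theta> m * g k m * h m) = 0" and n: "n \<in> II"
  shows "h n = 0"
proof -
  define phi where "phi v = (\<Sum>m\<in>II. omega \<theta> m * h m * pi_coord \<theta> (C *\<^sub>v v) m)" for v
  have phi0: "phi v = 0" if v: "v \<in> carrier_vec 6" for v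
  proof -
    from lc_complete[OF inj v] have vv: "C *\<^sub>v v = C *\<^sub>v lc \<theta> (pi_coord \<theta> v)" by (rule arg_cong)
    have "phi v = (\<Sum>m\<in>II. omega \<theta> m * h m * pi_coord \<theta> (C *\<^sub>v lc \<theta> (pi_coord \<theta> v)) m)"
      unfolding phi_def vv ..
    also have "\<dots> = (\<Sum>m\<in>II. omega \<theta> m * h m * (\<Sum>l\<in>II. pi_coord \<theta> v l * g l m))"
      by (simp only: pi_mat_lc[OF C])
    also have "\<dots> = (\<Sum>m\<in>II. \<Sum>l\<in>II. pi_coord \<theta> v l * (omega \<theta> m * g l m * h m))"
      by (rule sum.cong) (simp_all add: sum_distrib_left mult_ac)
    also have "\<dots> = (\<Sum>l\<in>II. pi_coord \<theta> v l * (\<Sum>m\<in>II. omega \<theta> m * g l m * h m))"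
      by (subst sum.swap) (simp add: sum_distrib_left)
    also have "\<dots> = 0" using h by simp
    finally show ?thesis .
  qed
  have ce: "C *\<^sub>v (Ci *\<^sub>v lc \<theta> (ee n)) = lc \<theta> (ee n)"
    using inv_cancel[OF Ci C CCi] by simp
  have "phi (Ci *\<^sub>v lc \<theta> (ee n)) = 0" by (rule phi0) (use Ci in simp)
  then have "(\<Sum>m\<in>II. omega \<theta> m * h m * pi_coord \<theta> (lc \<theta> (ee n)) m) = 0"
    unfolding phi_def ce .
  also have "(\<Sum>m\<in>II. omega \<theta> m * h m * pi_coord \<theta> (lc \<theta> (ee n)) m) = (\<Sum>m\<in>II. ee n m * (omega \<theta> m * h m))"
    by (rule sum.cong) (auto simp: pi_lc[OF inj] ee_def)
  also have "\<dots> = omega \<theta> n * h n" by (rule ee_sum[OF n])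
  finally show ?thesis using omega_nz[OF inj n] by simp
qed

lemma F3: assumes j: "j \<in> II" shows "(\<Sum>m\<in>II. omega \<theta> m * g j m * g j m) \<noteq> 0"
proof
  assume a: "(\<Sum>m\<in>II. omega \<theta> m * g j m * g j m) = 0"
  have "\<forall>k\<in>II. (\<Sum>m\<in>II. omega \<theta> m * g k m * g j m) = 0"
  proof
    fix k assume k: "k \<in> II"
    show "(\<Sum>m\<in>II. omega \<theta> m * g k m * g j m) = 0"
    proof (cases "k = j")
      case True then show ?thesis using a by simp
    next
      case False then show ?thesis using orth'[OF k j False, of 0] by simp
    qed
  qed
  then have "\<forall>n\<in>II. g j n = 0" using F2 by blast
  then show False using F1[OF j] by blast
qed

lemma F4: assumes j: "j \<in> II" and m: "m \<in> II" "g j m \<noteq> 0" and m': "m' \<in> II" "g j m' \<noteq> 0"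
  shows "m = m'"
proof -
  define b0 where "b0 = (\<Sum>m\<in>II. omega \<theta> m * g j m * g j m)"
  define b1 where "b1 = (\<Sum>m\<in>II. \<theta> m * omega \<theta> m * g j m * g j m)"
  define lam where "lam = b1 / b0"
  have b0: "b0 \<noteq> 0" using F3[OF j] by (simp add: b0_def)
  define h where "h n = (\<theta> n - lam) * g j n" for n
  have "\<forall>k\<in>II. (\<Sum>n\<in>II. omega \<theta> n * g k n * h n) = 0"
  proof
    fix k assume k: "k \<in> II"
    have e: "(\<Sum>n\<in>II. omega \<theta> n * g k n * h n) =
      (\<Sum>n\<in>II. \<theta> n * omega \<theta> n * g k n * g j n) - lam * (\<Sum>n\<in>II. omega \<theta> n * g k n * g j n)"
      by (simp add: h_def sum_distrib_left sum_subtractf[symmetric] algebra_simps)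
    show "(\<Sum>n\<in>II. omega \<theta> n * g k n * h n) = 0"
    proof (cases "k = j")
      case True
      show ?thesis unfolding e unfolding True b0_def[symmetric] b1_def[symmetric] lam_def using b0 by simp
    next
      case False
      then show ?thesis unfolding e using orth'[OF k j False, of 0] orth'[OF k j False, of 1] by simp
    qed
  qed
  then have "\<forall>n\<in>II. h n = 0" using F2 by blast
  then have "\<theta> m = lam" "\<theta> m' = lam" using m m' by (auto simp: h_def)
  then show ?thesis using inj m(1) m'(1) unfolding inj_on_def by auto
qed

lemma F5: assumes j: "j \<in> II" and k: "k \<in> II" and jk: "j \<noteq> k" and m: "m \<in> II" and gj: "g j m \<noteq> 0"
  shows "g k m = 0"
proof (rule ccontr)
  assume gk: "g k m \<noteq> 0"
  have "(\<Sum>n\<in>II. \<theta> n ^ 0 * omega \<theta> n * g j n * g k n) = (\<Sum>n\<in>II. if n = m then omega \<theta> m * g j m * g k m else 0)"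
  proof (rule sum.cong)
    fix n assume n: "n \<in> II"
    show "\<theta> n ^ 0 * omega \<theta> n * g j n * g k n = (if n = m then omega \<theta> m * g j m * g k m else 0)"
      using F4[OF j m gj n] by (cases "n = m") auto
  qed simp
  also have "\<dots> = omega \<theta> m * g j m * g k m" using m by simp
  finally show False using orth'[OF j k jk, of 0] omega_nz[OF inj m] gj gk by simp
qed

lemma mono: assumes m: "m \<in> II"
  shows "\<exists>l0\<in>II. \<forall>v\<in>carrier_vec 6. pi_coord \<theta> (C *\<^sub>v v) m = pi_coord \<theta> v l0 * g l0 m"
proof -
  obtain l0 where l0: "l0 \<in> II" and z: "\<forall>l\<in>II. l \<noteq> l0 \<longrightarrow> g l m = 0"
  proof (cases "\<exists>l0\<in>II. g l0 m \<noteq> 0")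
    case True
    then obtain l0 where "l0 \<in> II" "g l0 m \<noteq> 0" by blast
    then show ?thesis using F5 m that by metis
  next
    case False then show ?thesis using that m by blast
  qed
  have "pi_coord \<theta> (C *\<^sub>v v) m = pi_coord \<theta> v l0 * g l0 m" if v: "v \<in> carrier_vec 6" for v
  proof -
    from lc_complete[OF inj v] have vv: "C *\<^sub>v v = C *\<^sub>v lc \<theta> (pi_coord \<theta> v)" by (rule arg_cong)
    have "pi_coord \<theta> (C *\<^sub>v v) m = (\<Sum>l\<in>II. pi_coord \<theta> v l * g l m)"
      unfolding vv by (rule pi_mat_lc[OF C])
    also have "\<dots> = (\<Sum>l\<in>II. if l = l0 then pi_coord \<theta> v l0 * g l0 m else 0)"
      by (rule sum.cong) (use z in auto)
    also have "\<dots> = pi_coord \<theta> v l0 * g l0 m" using l0 by simp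
    finally show ?thesis .
  qed
  then show ?thesis using l0 by blast
qed

end


definition dv :: "'a::field \<Rightarrow> 'a \<Rightarrow> 'a vec" where
  "dv a b = vec 6 (\<lambda>k. if k = 0 then a else if k = 1 then b else 0)"

lemma dv_carrier[simp]: "dv a b \<in> carrier_vec 6" by (simp add: dv_def)

lemma Pval_dv: "Pval (dv a b) y = a + b * y"
  by (simp add: Pval_def dv_def numeral_eq_Suc lessThan_Suc)

lemma Pval_smult: "p \<in> carrier_vec 6 \<Longrightarrow> Pval (c \<cdot>\<^sub>v p) y = c * Pval p y"
  by (simp add: Pval_def sum_distrib_left mult.assoc)

lemma pi_smult: "p \<in> carrier_vec 6 \<Longrightarrow> pi_coord \<theta> (c \<cdot>\<^sub>v p) m = c * pi_coord \<theta> p m"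
  by (simp add: pi_coord_def Pval_smult)

lemma dv_D0: "a \<noteq> 0 \<or> b \<noteq> 0 \<Longrightarrow> on_Delta0 (dv a b)"
  unfolding on_Delta0_def is_proj_point_def
proof (intro conjI ballI)
  assume "a \<noteq> 0 \<or> b \<noteq> 0"
  then show "dv a b \<noteq> 0\<^sub>v 6"
  proof
    assume "a \<noteq> 0" then have "dv a b $ 0 \<noteq> 0\<^sub>v 6 $ 0" by (simp add: dv_def)
    then show ?thesis by metis
  next
    assume "b \<noteq> 0" then have "dv a b $ 1 \<noteq> 0\<^sub>v 6 $ 1" by (simp add: dv_def)
    then show ?thesis by metis
  qed
qed (auto simp: dv_def)

lemma on_S_smult: assumes "on_S \<theta> p" "d \<noteq> 0" shows "on_S \<theta> (d \<cdot>\<^sub>v p)"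
proof -
  have p: "p \<in> carrier_vec 6" "p \<noteq> 0\<^sub>v 6" using assms unfolding on_S_def is_proj_point_def by auto
  have "d \<cdot>\<^sub>v p \<noteq> 0\<^sub>v 6"
  proof
    assume "d \<cdot>\<^sub>v p = 0\<^sub>v 6"
    then have "(1/d) \<cdot>\<^sub>v (d \<cdot>\<^sub>v p) = (1/d) \<cdot>\<^sub>v 0\<^sub>v 6" by simp
    also have "\<dots> = 0\<^sub>v 6" by (intro eq_vecI) auto
    finally have "(1/d) \<cdot>\<^sub>v (d \<cdot>\<^sub>v p) = 0\<^sub>v 6" .
    then have "p = 0\<^sub>v 6" using assms(2) p(1) by (simp add: smult_smult_assoc)
    then show False using p by simp
  qed
  moreover have "(\<Sum>j\<in>II. \<theta> j ^ i * omega \<theta> j * (pi_coord \<theta> (d \<cdot>\<^sub>v p) j)^2)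
     = d^2 * (\<Sum>j\<in>II. \<theta> j ^ i * omega \<theta> j * (pi_coord \<theta> p j)^2)" for i
    using p(1) by (simp add: pi_smult sum_distrib_left power_mult_distrib mult_ac)
  ultimately show ?thesis using assms p(1) unfolding on_S_def is_proj_point_def by auto
qed

context mono_setup begin

lemma scalar:
  assumes D0: "\<forall>p. on_Delta0 p \<longrightarrow> (\<exists>c. C *\<^sub>v p = c \<cdot>\<^sub>v p)"
  shows "\<exists>\<mu>. \<mu> \<noteq> 0 \<and> (\<forall>v\<in>carrier_vec 6. C *\<^sub>v v = \<mu> \<cdot>\<^sub>v v)"
proof -
  obtain c0 where c0: "C *\<^sub>v dv 1 0 = c0 \<cdot>\<^sub>v dv 1 0" using D0 dv_D0[of 1 0] by auto
  obtain c1 where c1: "C *\<^sub>v dv 0 1 = c1 \<cdot>\<^sub>v dv 0 1" using D0 dv_D0[of 0 1] by auto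
  obtain c2 where c2: "C *\<^sub>v dv 1 1 = c2 \<cdot>\<^sub>v dv 1 1" using D0 dv_D0[of 1 1] by auto
  have pidv: "pi_coord \<theta> (dv a b) m = (a + b * \<theta> m) / omega \<theta> m" for a b m
    by (simp add: pi_coord_def Pval_dv)
  have key: "\<exists>l0\<in>II. (\<forall>v\<in>carrier_vec 6. pi_coord \<theta> (C *\<^sub>v v) m = pi_coord \<theta> v l0 * g l0 m)
     \<and> c2 + c2 * \<theta> m = c0 + c1 * \<theta> m \<and> c1 * \<theta> m = c0 * \<theta> l0
     \<and> g l0 m = c0 * omega \<theta> l0 / omega \<theta> m" if m: "m \<in> II" for m
  proof -
    obtain l0 where l0: "l0 \<in> II" and L: "\<forall>v\<in>carrier_vec 6. pi_coord \<theta> (C *\<^sub>v v) m = pi_coord \<theta> v l0 * g l0 m"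
      using mono[OF m] by blast
    define G where "G = g l0 m"
    have wm: "omega \<theta> m \<noteq> 0" and wl: "omega \<theta> l0 \<noteq> 0" using omega_nz[OF inj] m l0 by auto
    have E: "c * ((a + b * \<theta> m) / omega \<theta> m) = (a + b * \<theta> l0) / omega \<theta> l0 * G"
      if "C *\<^sub>v dv a b = c \<cdot>\<^sub>v dv a b" for a b c
    proof -
      have "pi_coord \<theta> (C *\<^sub>v dv a b) m = (a + b * \<theta> l0) / omega \<theta> l0 * G"
        using L by (simp add: pidv G_def)
      then show ?thesis unfolding that by (simp add: pi_smult pidv)
    qed
    have E0: "c0 / omega \<theta> m = G / omega \<theta> l0" using E[OF c0] by simp
    have E1: "c1 * \<theta> m / omega \<theta> m = \<theta> l0 / omega \<theta> l0 * G" using E[OF c1] by simp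
    have E2: "c2 * ((1 + \<theta> m) / omega \<theta> m) = (1 + \<theta> l0) / omega \<theta> l0 * G" using E[OF c2] by simp
    have G: "G = c0 * omega \<theta> l0 / omega \<theta> m" using E0 wm wl by (simp add: field_simps)
    have e1: "c1 * \<theta> m = c0 * \<theta> l0" using E1 wm wl unfolding G by (simp add: field_simps)
    have "(c2 + c2 * \<theta> m) * (omega \<theta> l0 * omega \<theta> m) = (c0 + c0 * \<theta> l0) * (omega \<theta> l0 * omega \<theta> m)"
      using E2 wm wl unfolding G by (simp add: field_simps)
    then have e2: "c2 + c2 * \<theta> m = c0 + c0 * \<theta> l0" using wm wl by simp
    have e2': "c2 + c2 * \<theta> m = c0 + c1 * \<theta> m" using e1 e2 by simp
    have G': "g l0 m = c0 * omega \<theta> l0 / omega \<theta> m" using G by (simp add: G_def)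
    show ?thesis by (rule bexI[of _ l0]) (use l0 L G' e1 e2' in blast)+
  qed
  have one: "(1::nat) \<in> II" and two: "(2::nat) \<in> II" by auto
  have t12: "\<theta> 1 \<noteq> \<theta> 2" using inj one two unfolding inj_on_def by force
  have "c2 + c2 * \<theta> 1 = c0 + c1 * \<theta> 1" "c2 + c2 * \<theta> 2 = c0 + c1 * \<theta> 2"
    using key[OF one] key[OF two] by auto
  moreover have "(c2 - c1) * (\<theta> 1 - \<theta> 2) = (c2 + c2*\<theta> 1 - (c0 + c1*\<theta> 1)) - (c2 + c2*\<theta> 2 - (c0 + c1*\<theta> 2))"
    by (simp add: algebra_simps)
  ultimately have "(c2 - c1) * (\<theta> 1 - \<theta> 2) = 0" by simp
  then have c12: "c1 = c2" using t12 by simp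
  have c02: "c0 = c2" using \<open>c2 + c2 * \<theta> 1 = c0 + c1 * \<theta> 1\<close> c12 by simp
  have c0nz: "c0 \<noteq> 0"
  proof
    assume "c0 = 0"
    moreover have "(0::'a) \<cdot>\<^sub>v dv 1 0 = 0\<^sub>v 6" by (intro eq_vecI) (auto simp: dv_def)
    ultimately have "C *\<^sub>v dv 1 0 = 0\<^sub>v 6" using c0 by auto
    then have "dv 1 0 = Ci *\<^sub>v 0\<^sub>v 6" using inv_cancel[OF C Ci CiC, of "dv 1 0"] by simp
    also have "\<dots> = 0\<^sub>v 6" using Ci by auto
    finally have "dv (1::'a) 0 $ 0 = 0" by simp
    then show False by (simp add: dv_def)
  qed
  have pm: "pi_coord \<theta> (C *\<^sub>v v) m = c0 * pi_coord \<theta> v m" if m: "m \<in> II" and v: "v \<in> carrier_vec 6" for m v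
  proof -
    obtain l0 where l0: "l0 \<in> II" and L: "\<forall>v\<in>carrier_vec 6. pi_coord \<theta> (C *\<^sub>v v) m = pi_coord \<theta> v l0 * g l0 m"
      and e1: "c1 * \<theta> m = c0 * \<theta> l0" and G: "g l0 m = c0 * omega \<theta> l0 / omega \<theta> m"
      using key[OF m] by blast
    have "\<theta> m = \<theta> l0" using e1 c12 c02 c0nz by simp
    then have "l0 = m" using inj l0 m unfolding inj_on_def by metis
    then show ?thesis using L v G omega_nz[OF inj m] by simp
  qed
  have "C *\<^sub>v v = c0 \<cdot>\<^sub>v v" if v: "v \<in> carrier_vec 6" for v
  proof -
    have Cv: "C *\<^sub>v v \<in> carrier_vec 6" using C v by simp
    have "C *\<^sub>v v = lc \<theta> (pi_coord \<theta> (C *\<^sub>v v))" by (rule lc_complete[OF inj Cv])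
    also have "\<dots> = lc \<theta> (\<lambda>m. c0 * pi_coord \<theta> v m)" by (rule lc_cong) (simp add: pm v)
    also have "\<dots> = c0 \<cdot>\<^sub>v lc \<theta> (pi_coord \<theta> v)" by (rule lc_smult)
    also have "lc \<theta> (pi_coord \<theta> v) = v" using lc_complete[OF inj v] by simp
    finally show ?thesis .
  qed
  then show ?thesis using c0nz by blast
qed

end


lemma inv_obtain: fixes B :: "'a::field mat"
  assumes "B \<in> carrier_mat 6 6" "invertible_mat B"
  obtains Bi where "Bi \<in> carrier_mat 6 6" "B * Bi = 1\<^sub>m 6" "Bi * B = 1\<^sub>m 6"
proof -
  obtain Bi where a: "B * Bi = 1\<^sub>m (dim_row B)" and b: "Bi * B = 1\<^sub>m (dim_row Bi)"
    using assms(2) unfolding invertible_mat_def inverts_mat_def by blast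
  have "dim_col Bi = 6" using a assms(1) by (metis carrier_matD(1) index_mult_mat(3) index_one_mat(3))
  moreover have "dim_row Bi = 6" using b assms(1) by (metis carrier_matD(2) index_mult_mat(3) index_one_mat(3))
  ultimately show ?thesis using that a b assms(1) by auto
qed

theorem mainTheorem8:
  fixes F :: "'a::field poly" and \<theta> :: "nat \<Rightarrow> 'a" and A B :: "'a mat"
  assumes alg_closed: "\<forall>q::'a poly. degree q \<ge> 1 \<longrightarrow> (\<exists>x. poly q x = 0)"
    and char_not_2: "(2::'a) \<noteq> 0"
    and degF: "degree F = 6"
    and roots: "\<forall>j\<in>{1..6}. poly F (\<theta> j) = 0"
    and distinct: "inj_on \<theta> {1..6}"
    and A: "in_GL_S \<theta> A" and B: "in_GL_S \<theta> B"
    and agree: "\<forall>p. on_Delta0 p \<longrightarrow> proj_eq (A *\<^sub>v p) (B *\<^sub>v p)"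
  shows "\<forall>p. on_S \<theta> p \<longrightarrow> proj_eq (A *\<^sub>v p) (B *\<^sub>v p)"
proof -
  have Ac: "A \<in> carrier_mat 6 6" and Ainv: "invertible_mat A"
    and AS: "\<forall>p. on_S \<theta> p \<longrightarrow> on_S \<theta> (A *\<^sub>v p)" using A unfolding in_GL_S_def by auto
  have Bc: "B \<in> carrier_mat 6 6" and Binv: "invertible_mat B"
    and Bsurj: "\<forall>q. on_S \<theta> q \<longrightarrow> (\<exists>p. on_S \<theta> p \<and> proj_eq (B *\<^sub>v p) q)"
    using B unfolding in_GL_S_def by auto
  obtain Ai where Ai: "Ai \<in> carrier_mat 6 6" "A * Ai = 1\<^sub>m 6" "Ai * A = 1\<^sub>m 6"
    using inv_obtain[OF Ac Ainv] by blast
  obtain Bi where Bi: "Bi \<in> carrier_mat 6 6" "B * Bi = 1\<^sub>m 6" "Bi * B = 1\<^sub>m 6"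
    using inv_obtain[OF Bc Binv] by blast
  define C where "C = Bi * A"
  define Ci where "Ci = Ai * B"
  have Cc: "C \<in> carrier_mat 6 6" and Cic: "Ci \<in> carrier_mat 6 6"
    using Ac Bc Ai Bi by (auto simp: C_def Ci_def)
  have Cv: "C *\<^sub>v v = Bi *\<^sub>v (A *\<^sub>v v)" if "v \<in> carrier_vec 6" for v
    unfolding C_def using Bi(1) Ac that by (rule assoc_mult_mat_vec)
  have CCi: "C * Ci = 1\<^sub>m 6"
  proof -
    have "C * Ci = Bi * (A * (Ai * B))" unfolding C_def Ci_def
      using Ac Ai(1) Bc Bi(1) by (simp add: assoc_mult_mat[of _ 6 6 _ 6 _ 6])
    also have "A * (Ai * B) = (A * Ai) * B" by (rule assoc_mult_mat[OF Ac Ai(1) Bc, symmetric])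
    also have "\<dots> = B" using Ai(2) Bc by simp
    finally show ?thesis using Bi(3) by simp
  qed
  have CiC: "Ci * C = 1\<^sub>m 6"
  proof -
    have "Ci * C = Ai * (B * (Bi * A))" unfolding C_def Ci_def
      using Ac Ai(1) Bc Bi(1) by (simp add: assoc_mult_mat[of _ 6 6 _ 6 _ 6])
    also have "B * (Bi * A) = (B * Bi) * A" by (rule assoc_mult_mat[OF Bc Bi(1) Ac, symmetric])
    also have "\<dots> = A" using Bi(2) Ac by simp
    finally show ?thesis using Ai(3) by simp
  qed
  have BiS: "on_S \<theta> (Bi *\<^sub>v q)" if q: "on_S \<theta> q" for q
  proof -
    obtain p c where p: "on_S \<theta> p" and c: "c \<noteq> 0" and Bp: "B *\<^sub>v p = c \<cdot>\<^sub>v q"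
      using Bsurj q unfolding proj_eq_def by blast
    have pc: "p \<in> carrier_vec 6" and qc: "q \<in> carrier_vec 6"
      using p q unfolding on_S_def is_proj_point_def by auto
    have "p = Bi *\<^sub>v (B *\<^sub>v p)" using inv_cancel[OF Bc Bi(1) Bi(3) pc] by simp
    also have "\<dots> = c \<cdot>\<^sub>v (Bi *\<^sub>v q)" unfolding Bp using Bi(1) qc by (rule mult_mat_vec)
    finally have "(1/c) \<cdot>\<^sub>v p = (1/c) \<cdot>\<^sub>v (c \<cdot>\<^sub>v (Bi *\<^sub>v q))" by simp
    also have "\<dots> = Bi *\<^sub>v q" using c by (simp add: smult_smult_assoc)
    finally show ?thesis using on_S_smult[OF p, of "1/c"] c by simp
  qed
  have SS: "\<forall>p. on_S \<theta> p \<longrightarrow> on_S \<theta> (C *\<^sub>v p)"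
  proof (intro allI impI)
    fix p assume p: "on_S \<theta> p"
    then have "p \<in> carrier_vec 6" unfolding on_S_def is_proj_point_def by auto
    then show "on_S \<theta> (C *\<^sub>v p)" using BiS AS p Cv by simp
  qed
  interpret mono_setup \<theta> C Ci
    by unfold_locales (use alg_closed char_not_2 distinct Cc Cic CCi CiC SS in auto)
  have D0: "\<forall>p. on_Delta0 p \<longrightarrow> (\<exists>c. C *\<^sub>v p = c \<cdot>\<^sub>v p)"
  proof (intro allI impI)
    fix p :: "'a vec" assume p: "on_Delta0 p"
    then have pc: "p \<in> carrier_vec 6" unfolding on_Delta0_def is_proj_point_def by auto
    obtain c :: 'a where c: "A *\<^sub>v p = c \<cdot>\<^sub>v (B *\<^sub>v p)" using agree p unfolding proj_eq_def by blast
    have "C *\<^sub>v p = Bi *\<^sub>v (c \<cdot>\<^sub>v (B *\<^sub>v p))" using Cv[OF pc] c by simp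
    also have "\<dots> = c \<cdot>\<^sub>v (Bi *\<^sub>v (B *\<^sub>v p))" using Bi(1) Bc pc by (intro mult_mat_vec) auto
    also have "Bi *\<^sub>v (B *\<^sub>v p) = p" by (rule inv_cancel[OF Bc Bi(1) Bi(3) pc])
    finally show "\<exists>c. C *\<^sub>v p = c \<cdot>\<^sub>v p" by blast
  qed
  obtain \<mu> where mu: "\<mu> \<noteq> 0" and Cmu: "\<forall>v\<in>carrier_vec 6. C *\<^sub>v v = \<mu> \<cdot>\<^sub>v v"
    using scalar[OF D0] by blast
  show ?thesis
  proof (intro allI impI)
    fix p assume p: "on_S \<theta> p"
    then have pc: "p \<in> carrier_vec 6" unfolding on_S_def is_proj_point_def by auto
    have Apc: "A *\<^sub>v p \<in> carrier_vec 6" using Ac pc by simp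
    have "A *\<^sub>v p = B *\<^sub>v (Bi *\<^sub>v (A *\<^sub>v p))" using inv_cancel[OF Bi(1) Bc Bi(2) Apc] by simp
    also have "\<dots> = B *\<^sub>v (\<mu> \<cdot>\<^sub>v p)" using Cv[OF pc] Cmu pc by simp
    also have "\<dots> = \<mu> \<cdot>\<^sub>v (B *\<^sub>v p)" using Bc pc by (rule mult_mat_vec)
    finally show "proj_eq (A *\<^sub>v p) (B *\<^sub>v p)" unfolding proj_eq_def using mu by blast
  qed
qed

end
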